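(* For positive integers $m\le k\le n$, define $$g(m,n,k)=\max_y\Big\{\sum_{\tau=0}^{m}\frac{\binom{n-m}{k-\tau}}{(n-m)^{m-\tau}\binom{n-m}{k-m}}\cdot\frac{\binom{m}{\tau}}{m^{\tau}}(k-y)^{m-\tau}y^{\tau}:\ \frac{mk}{n}\le y\le m\Big\}.$$ Then for any $n\ge k\ge m$, $$[g(m,n,k)]^{1/m}\le \lim_{t\to\infty}[g(m,t,k)]^{1/m}\le \min\Big\{e,\ 1+\frac{k}{k-m+1}\Big\}.$$
   Context: Binomial coefficients $\binom{a}{b}$ are $0$ when $b>a$ or $b<0$; the limit is over integers $t\to\infty$. *)

theory Defs
  imports Complex_Main
begin

definition gterm :: "nat \<Rightarrow> nat \<Rightarrow> nat \<Rightarrow> real \<Rightarrow> real" where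
  "gterm m n k y = (\<Sum>\<tau> = 0..m.
     real ((n - m) choose (k - \<tau>)) / (real (n - m) ^ (m - \<tau>) * real ((n - m) choose (k - m)))
     * (real (m choose \<tau>) / real m ^ \<tau>) * (real k - y) ^ (m - \<tau>) * y ^ \<tau>)"

definition g :: "nat \<Rightarrow> nat \<Rightarrow> nat \<Rightarrow> real" where
  "g m n k = (SUP y \<in> {real m * real k / real n .. real m}. gterm m n k y)"

end

theory Submission imports Defs "HOL-Analysis.Analysis" "HOL-Real_Asymp.Real_Asymp" begin

lemma fs: "(u::real) ^ (Suc j) / fact j = real (Suc j) * (u ^ Suc j / fact (Suc j))"
proof -
  have "fact (Suc j) = real (Suc j) * (fact j :: real)" by (rule fact_Suc)
  moreover have "(fact j :: real) > 0" by simp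
  ultimately show ?thesis by (simp del: of_nat_Suc fact_Suc)
qed

lemma exp_partial_le:
  fixes u :: real assumes "0 \<le> u"
  shows "(\<Sum>i\<le>j. u ^ i / fact i) \<le> exp u"
proof -
  have "(\<Sum>i\<le>j. u ^ i / fact i) = (\<Sum>i\<in>{..j}. u ^ i /\<^sub>R fact i)"
    by (simp add: divide_inverse_commute)
  also have "\<dots> \<le> (\<Sum>n. u ^ n /\<^sub>R fact n)"
    by (rule sum_le_suminf[OF summable_exp_generic]) (use assms in auto)
  also have "\<dots> = exp u" by (simp add: exp_def)
  finally show ?thesis .
qed

lemma usum_le:
  fixes u :: real assumes "0 \<le> u"
  shows "u * (\<Sum>i\<le>j. u ^ i / fact i) \<le> real j * (\<Sum>i\<le>j. u ^ i / fact i) + u ^ (Suc j) / fact j"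
proof (induction j)
  case 0
  then show ?case by simp
next
  case (Suc j)
  have S: "0 \<le> (\<Sum>i\<le>j. u ^ i / fact i)" using assms by (intro sum_nonneg) auto
  have "u * (\<Sum>i\<le>Suc j. u ^ i / fact i) = u * (\<Sum>i\<le>j. u ^ i / fact i) + u ^ Suc (Suc j) / fact (Suc j)"
    by (simp add: algebra_simps)
  also have "\<dots> \<le> real j * (\<Sum>i\<le>j. u ^ i / fact i) + u ^ (Suc j) / fact j + u ^ Suc (Suc j) / fact (Suc j)"
    using Suc by simp
  also have "\<dots> \<le> real (Suc j) * (\<Sum>i\<le>Suc j. u ^ i / fact i) + u ^ Suc (Suc j) / fact (Suc j)"
  proof -
    have "u ^ (Suc j) / fact j = real (Suc j) * (u ^ Suc j / fact (Suc j))"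
      by (rule fs)
    moreover have "real (Suc j) * (\<Sum>i\<le>Suc j. u ^ i / fact i) = real (Suc j) * (\<Sum>i\<le>j. u ^ i / fact i) + real (Suc j) * (u ^ Suc j / fact (Suc j))"
      by (simp add: algebra_simps)
    ultimately show ?thesis using S by (simp add: algebra_simps)
  qed
  finally show ?case .
qed

lemma key_partial:
  fixes u :: real assumes "0 \<le> u"
  shows "(real a + u) ^ j * fact a \<le> fact (a + j) * (\<Sum>i\<le>j. u ^ i / fact i)"
proof (induction j)
  case 0
  then show ?case by simp
next
  case (Suc j)
  define S where "S = (\<Sum>i\<le>j. u ^ i / fact i)"
  define F :: real where "F = fact (a + j)"
  have S: "0 \<le> S" unfolding S_def using assms by (intro sum_nonneg) auto
  have F: "0 < F" unfolding F_def by simp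
  have au: "0 \<le> real a + u" using assms by simp
  have "(real a + u) ^ Suc j * fact a = (real a + u) * ((real a + u) ^ j * fact a)" by simp
  also have "\<dots> \<le> (real a + u) * (F * S)"
    using Suc au unfolding F_def S_def by (intro mult_left_mono) auto
  also have "\<dots> \<le> F * ((real a + real j + 1) * (S + u ^ Suc j / fact (Suc j)))"
  proof -
    have u1: "u * S \<le> real j * S + u ^ Suc j / fact j" using usum_le[OF assms] unfolding S_def .
    have "u ^ Suc j / fact j = real (Suc j) * (u ^ Suc j / fact (Suc j))"
      by (rule fs)
    hence "u * S \<le> (real j + 1) * S + (real a + real j + 1) * (u ^ Suc j / fact (Suc j))"
      using u1 S assms
      by (smt (verit) divide_nonneg_nonneg fact_ge_zero mult_right_mono of_nat_0_le_iff of_nat_Suc zero_le_power)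
    hence "(real a + u) * S \<le> (real a + real j + 1) * (S + u ^ Suc j / fact (Suc j))"
      by (simp add: algebra_simps)
    hence "F * ((real a + u) * S) \<le> F * ((real a + real j + 1) * (S + u ^ Suc j / fact (Suc j)))"
      using F by (intro mult_left_mono) auto
    thus ?thesis by (simp add: mult.left_commute)
  qed
  also have "\<dots> = fact (a + Suc j) * (\<Sum>i\<le>Suc j. u ^ i / fact i)"
    unfolding F_def S_def by (simp add: algebra_simps add_divide_distrib)
  finally show ?case .
qed

lemma key_exp:
  fixes u :: real assumes "0 \<le> u"
  shows "fact a / fact (a + j) * (real a + u) ^ j \<le> exp u"
proof -
  have "(real a + u) ^ j * fact a \<le> fact (a + j) * exp u"
    using key_partial[OF assms, of a j] exp_partial_le[OF assms, of j]
    by (smt (verit) fact_gt_zero mult_left_mono)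
  thus ?thesis by (simp add: field_simps)
qed


lemma binom_step: "(N choose Suc r) * Suc r = (N - r) * (N choose r)"
proof (cases N)
  case 0
  then show ?thesis by simp
next
  case (Suc M)
  then show ?thesis using Suc_times_binomial_eq[of M r] binomial_absorb_comp[of "Suc M" r]
    by (metis diff_Suc_1)
qed

lemma ffact_eq:
  "a + j \<le> N \<Longrightarrow> real (N choose (a + j)) * fact (a + j)
     = real (N choose a) * fact a * (\<Prod>i<j. (real N - real (a + i)))"
proof (induction j)
  case 0
  then show ?case by simp
next
  case (Suc j)
  have le: "a + j \<le> N" using Suc.prems by simp
  have "real (N choose (a + Suc j)) * fact (a + Suc j)
      = real ((N choose Suc (a + j)) * Suc (a + j)) * fact (a + j)"
    by (simp only: add_Suc_right fact_Suc of_nat_mult mult.assoc)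
  also have "\<dots> = real ((N - (a + j)) * (N choose (a + j))) * fact (a + j)"
    by (simp only: binom_step)
  also have "\<dots> = (real N - real (a + j)) * (real (N choose (a + j)) * fact (a + j))"
    using le by (simp add: of_nat_diff)
  also have "\<dots> = (real N - real (a + j)) * (real (N choose a) * fact a * (\<Prod>i<j. (real N - real (a + i))))"
    using Suc.IH le by simp
  also have "\<dots> = real (N choose a) * fact a * (\<Prod>i<Suc j. (real N - real (a + i)))"
    by (simp add: prod.lessThan_Suc algebra_simps)
  finally show ?case .
qed

lemma coef_le':
  assumes "a \<le> N"
  shows "real (N choose (a + j)) / (real N ^ j * real (N choose a)) \<le> fact a / fact (a + j)"
proof (cases "a + j \<le> N")
  case False
  then show ?thesis by (simp add: binomial_eq_0)
next
  case True
  define P where "P = (\<Prod>i<j. (real N - real (a + i)))"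
  have C: "real (N choose a) > 0" using assms by simp
  have Nj: "real N ^ j > 0" using True by (cases "N = 0") auto
  have P0: "0 \<le> P" unfolding P_def using True by (intro prod_nonneg) auto
  have PN: "P \<le> real N ^ j"
  proof -
    have "P \<le> (\<Prod>i<j. real N)" unfolding P_def using True by (intro prod_mono) auto
    thus ?thesis by simp
  qed
  have eq: "real (N choose (a + j)) = real (N choose a) * fact a * P / fact (a + j)"
    using ffact_eq[OF True] unfolding P_def by (simp add: field_simps)
  have "real (N choose (a + j)) / (real N ^ j * real (N choose a)) = fact a / fact (a + j) * (P / real N ^ j)"
    unfolding eq using C Nj by (simp add: field_simps)
  also have "\<dots> \<le> fact a / fact (a + j) * 1"
    using PN Nj by (intro mult_left_mono) auto
  finally show ?thesis by simp
qed

lemma coef_lim: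
  "(\<lambda>t. real ((t - m) choose (a + j)) / (real (t - m) ^ j * real ((t - m) choose a)))
     \<longlonglongrightarrow> fact a / fact (a + j)"
proof -
  define f where "f = (\<lambda>t::nat. fact a / fact (a + j) * (\<Prod>i<j. (real (t - m) - real (a + i)) / real (t - m)) :: real)"
  have ev: "\<forall>\<^sub>F t in sequentially. f t = real ((t - m) choose (a + j)) / (real (t - m) ^ j * real ((t - m) choose a))"
  proof (rule eventually_mono[OF eventually_ge_at_top[of "m + a + j + 1"]])
    fix t :: nat assume t: "m + a + j + 1 \<le> t"
    define N where "N = t - m"
    have aj: "a + j \<le> N" "a \<le> N" "0 < N" using t unfolding N_def by auto
    define P where "P = (\<Prod>i<j. (real N - real (a + i)))"
    have C: "real (N choose a) > 0" using aj by simp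
    have Nj: "real N ^ j > 0" using aj by simp
    have eq: "real (N choose (a + j)) = real (N choose a) * fact a * P / fact (a + j)"
      using ffact_eq[OF aj(1)] unfolding P_def by (simp add: field_simps)
    have pr: "(\<Prod>i<j. (real N - real (a + i)) / real N) = P / real N ^ j"
      unfolding P_def by (simp add: prod_dividef)
    show "f t = real ((t - m) choose (a + j)) / (real (t - m) ^ j * real ((t - m) choose a))"
      unfolding f_def N_def[symmetric] pr unfolding eq using C Nj by (simp add: field_simps)
  qed
  have "f \<longlonglongrightarrow> fact a / fact (a + j) * (\<Prod>i<j. 1)"
    unfolding f_def
  proof (intro tendsto_mult tendsto_const tendsto_prod)
    fix i
    show "(\<lambda>t. (real (t - m) - real (a + i)) / real (t - m)) \<longlonglongrightarrow> 1" by real_asymp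
  qed
  hence "f \<longlonglongrightarrow> fact a / fact (a + j)" by simp
  thus ?thesis using tendsto_cong[OF ev] by simp
qed


definition hfun :: "nat \<Rightarrow> nat \<Rightarrow> real \<Rightarrow> real" where
  "hfun m k y = (\<Sum>\<tau> = 0..m. fact (k - m) / fact (k - \<tau>)
     * (real (m choose \<tau>) / real m ^ \<tau>) * (real k - y) ^ (m - \<tau>) * y ^ \<tau>)"

lemma gterm_le:
  assumes "m \<le> k" "k \<le> t" "0 \<le> y" "y \<le> real m"
  shows "gterm m t k y \<le> hfun m k y"
  unfolding gterm_def hfun_def
proof (rule sum_mono)
  fix \<tau> assume "\<tau> \<in> {0..m}"
  hence tm: "\<tau> \<le> m" by simp
  have kt: "k - \<tau> = (k - m) + (m - \<tau>)" using tm assms by simp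
  have c: "real ((t - m) choose (k - \<tau>)) / (real (t - m) ^ (m - \<tau>) * real ((t - m) choose (k - m)))
      \<le> fact (k - m) / fact (k - \<tau>)"
    unfolding kt by (rule coef_le') (use assms in simp)
  have ky: "0 \<le> real k - y" using assms by simp
  show "real ((t - m) choose (k - \<tau>)) / (real (t - m) ^ (m - \<tau>) * real ((t - m) choose (k - m)))
     * (real (m choose \<tau>) / real m ^ \<tau>) * (real k - y) ^ (m - \<tau>) * y ^ \<tau>
     \<le> fact (k - m) / fact (k - \<tau>) * (real (m choose \<tau>) / real m ^ \<tau>) * (real k - y) ^ (m - \<tau>) * y ^ \<tau>"
    using c ky assms by (intro mult_right_mono) auto
qed

lemma gterm_lim:
  assumes "m \<le> k"
  shows "(\<lambda>t. gterm m t k y) \<longlonglongrightarrow> hfun m k y"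
  unfolding gterm_def hfun_def
proof (intro tendsto_sum tendsto_mult tendsto_const)
  fix \<tau> assume "\<tau> \<in> {0..m}"
  hence tm: "\<tau> \<le> m" by simp
  have kt: "k - \<tau> = (k - m) + (m - \<tau>)" using tm assms by simp
  show "(\<lambda>t. real ((t - m) choose (k - \<tau>)) / (real (t - m) ^ (m - \<tau>) * real ((t - m) choose (k - m))))
      \<longlonglongrightarrow> fact (k - m) / fact (k - \<tau>)"
    unfolding kt by (rule coef_lim)
qed

lemma fact_ge: "fact a * real (a + 1) ^ j \<le> (fact (a + j) :: real)"
proof (induction j)
  case 0
  then show ?case by simp
next
  case (Suc j)
  have "fact a * real (a + 1) ^ Suc j = real (a + 1) * (fact a * real (a + 1) ^ j)" by simp
  also have "\<dots> \<le> real (a + 1) * fact (a + j)" using Suc by (intro mult_left_mono) auto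
  also have "\<dots> \<le> real (Suc (a + j)) * fact (a + j)" by (intro mult_right_mono) auto
  also have "\<dots> = fact (a + Suc j)" by (simp add: fact_Suc del: of_nat_Suc)
  finally show ?case .
qed

lemma h_le:
  assumes "0 < m" "m \<le> k" "0 \<le> y" "0 \<le> D"
    and b: "\<And>\<tau>. \<tau> \<le> m \<Longrightarrow> fact (k - m) / fact (k - \<tau>) * (real k - y) ^ (m - \<tau>) \<le> D * X ^ (m - \<tau>)"
  shows "hfun m k y \<le> D * (y / real m + X) ^ m"
proof -
  have "hfun m k y = (\<Sum>\<tau>\<le>m. real (m choose \<tau>) * (y / real m) ^ \<tau> * (fact (k - m) / fact (k - \<tau>) * (real k - y) ^ (m - \<tau>)))"
    unfolding hfun_def atLeast0AtMost by (intro sum.cong refl) (simp add: power_divide field_simps)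
  also have "\<dots> \<le> (\<Sum>\<tau>\<le>m. real (m choose \<tau>) * (y / real m) ^ \<tau> * (D * X ^ (m - \<tau>)))"
    using assms b by (intro sum_mono mult_left_mono) auto
  also have "\<dots> = D * (\<Sum>\<tau>\<le>m. real (m choose \<tau>) * (y / real m) ^ \<tau> * X ^ (m - \<tau>))"
    by (simp add: sum_distrib_left algebra_simps)
  also have "\<dots> = D * (y / real m + X) ^ m" by (simp add: binomial_ring)
  finally show ?thesis .
qed

lemma h_bound:
  assumes "0 < m" "m \<le> k" "0 \<le> y" "y \<le> real m"
  shows "hfun m k y \<le> (min (exp 1) (1 + real k / (real k - real m + 1))) ^ m"
proof -
  have ky: "0 \<le> real k - y" using assms by simp
  have e: "hfun m k y \<le> exp 1 ^ m"
  proof -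
    have "hfun m k y \<le> exp (real m - y) * (y / real m + 1) ^ m"
    proof (rule h_le[OF assms(1,2,3)])
      fix \<tau> assume tm: "\<tau> \<le> m"
      have kt: "k - \<tau> = (k - m) + (m - \<tau>)" using tm assms by simp
      have "real k - y = real (k - m) + (real m - y)" using assms by (simp add: of_nat_diff)
      hence "fact (k - m) / fact (k - \<tau>) * (real k - y) ^ (m - \<tau>) \<le> exp (real m - y)"
        unfolding kt using key_exp[of "real m - y" "k - m" "m - \<tau>"] assms by simp
      thus "fact (k - m) / fact (k - \<tau>) * (real k - y) ^ (m - \<tau>) \<le> exp (real m - y) * 1 ^ (m - \<tau>)" by simp
    qed simp
    also have "\<dots> \<le> exp (real m - y) * exp (y / real m) ^ m"
      using assms by (intro mult_left_mono power_mono) (auto simp: add.commute[of _ 1] exp_ge_add_one_self)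
    also have "\<dots> = exp 1 ^ m"
      using assms by (simp add: exp_of_nat_mult[symmetric] exp_add[symmetric])
    finally show ?thesis .
  qed
  have b: "hfun m k y \<le> (1 + real k / (real k - real m + 1)) ^ m"
  proof -
    have km: "real k - real m + 1 = real (k - m + 1)" using assms by (simp add: of_nat_diff)
    have "hfun m k y \<le> 1 * (y / real m + real k / (real k - real m + 1)) ^ m"
    proof (rule h_le[OF assms(1,2,3)])
      fix \<tau> assume tm: "\<tau> \<le> m"
      have kt: "k - \<tau> = (k - m) + (m - \<tau>)" using tm assms by simp
      have f: "fact (k - m) * real (k - m + 1) ^ (m - \<tau>) \<le> (fact (k - \<tau>) :: real)"
        unfolding kt by (rule fact_ge)
      have f2: "fact (k - m) / fact (k - \<tau>) \<le> 1 / real (k - m + 1) ^ (m - \<tau>)"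
        using f by (simp add: field_simps)
      have p: "(real k - y) ^ (m - \<tau>) \<le> real k ^ (m - \<tau>)"
        using ky assms by (intro power_mono) auto
      have "fact (k - m) / fact (k - \<tau>) * (real k - y) ^ (m - \<tau>) \<le> 1 / real (k - m + 1) ^ (m - \<tau>) * real k ^ (m - \<tau>)"
        using f2 p ky by (intro mult_mono) auto
      also have "\<dots> = 1 * (real k / (real k - real m + 1)) ^ (m - \<tau>)"
        unfolding km by (simp add: power_divide)
      finally show "fact (k - m) / fact (k - \<tau>) * (real k - y) ^ (m - \<tau>) \<le> 1 * (real k / (real k - real m + 1)) ^ (m - \<tau>)" .
    qed simp
    also have "\<dots> \<le> (1 + real k / (real k - real m + 1)) ^ m"
    proof -
      have "y / real m \<le> 1" using assms by (simp add: divide_le_eq)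
      moreover have "0 \<le> real k / (real k - real m + 1)" unfolding km by simp
      ultimately show ?thesis using assms unfolding mult_1 by (intro power_mono) auto
    qed
    finally show ?thesis .
  qed
  show ?thesis using e b by (simp add: min_def)
qed


theorem proposition2:
  fixes m n k :: nat
  assumes "0 < m" "m \<le> k" "k \<le> n"
  shows "\<exists>L. (\<lambda>t. root m (g m t k)) \<longlonglongrightarrow> L
           \<and> root m (g m n k) \<le> L
           \<and> L \<le> min (exp 1) (1 + real k / (real k - real m + 1))"
proof -
  let ?h = "hfun m k"
  have contx: "\<And>x. isCont ?h x" unfolding hfun_def by (intro continuous_intros)
  have cont: "continuous_on {0..real m} ?h" using contx by (simp add: continuous_at_imp_continuous_on)
  obtain ys where ys: "ys \<in> {0..real m}" "\<And>y. y \<in> {0..real m} \<Longrightarrow> ?h y \<le> ?h ys"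
    using continuous_attains_sup[OF compact_Icc _ cont] by auto
  define H where "H = ?h ys"
  have int_ne: "real m * real k / real t \<le> real m" if "k \<le> t" for t
  proof -
    have "real m * real k \<le> real m * real t" using that by (intro mult_left_mono) auto
    moreover have "real t > 0" using that assms by simp
    ultimately show ?thesis by (simp add: divide_le_eq)
  qed
  have int_pos: "0 \<le> real m * real k / real t" for t by simp
  have gt_le: "gterm m t k y \<le> H" if "k \<le> t" "y \<in> {real m * real k / real t .. real m}" for t y
  proof -
    have y: "0 \<le> y" "y \<le> real m" using that order_trans[OF int_pos[of t]] by auto
    have "gterm m t k y \<le> ?h y" using gterm_le[OF assms(2) that(1) y] .
    also have "\<dots> \<le> H" unfolding H_def using ys y by auto
    finally show ?thesis .
  qed
  have gle: "g m t k \<le> H" if "k \<le> t" for t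
    unfolding g_def using int_ne[OF that] gt_le[OF that] by (intro cSUP_least) auto
  have gge: "gterm m t k y \<le> g m t k" if "k \<le> t" "y \<in> {real m * real k / real t .. real m}" for t y
    unfolding g_def using gt_le[OF that(1)] that(2) by (intro cSUP_upper bdd_aboveI2) auto
  have glim: "(\<lambda>t. g m t k) \<longlonglongrightarrow> H"
  proof (rule order_tendstoI)
    fix b assume "H < b"
    show "\<forall>\<^sub>F t in sequentially. g m t k < b"
      using eventually_ge_at_top[of k] by eventually_elim (use gle \<open>H < b\<close> in force)
  next
    fix b assume b: "b < H"
    obtain y0 where y0: "0 < y0" "y0 \<le> real m" "b < ?h y0"
    proof (cases "ys > 0")
      case True
      then show ?thesis using that[of ys] ys b unfolding H_def by auto
    next
      case False
      hence ys0: "ys = 0" using ys by auto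
      have "(\<lambda>i. real m / real (Suc i)) \<longlonglongrightarrow> 0" by real_asymp
      hence "(\<lambda>i. ?h (real m / real (Suc i))) \<longlonglongrightarrow> ?h 0"
        using isCont_tendsto_compose[OF contx] by blast
      hence "\<forall>\<^sub>F i in sequentially. b < ?h (real m / real (Suc i))"
        using b ys0 unfolding H_def by (intro order_tendstoD) auto
      then obtain i where "b < ?h (real m / real (Suc i))" by (meson eventually_sequentially order_refl)
      moreover have "0 < real m / real (Suc i)" "real m / real (Suc i) \<le> real m"
        using assms by (auto simp: divide_le_eq)
      ultimately show ?thesis using that by blast
    qed
    have e1: "\<forall>\<^sub>F t in sequentially. b < gterm m t k y0"
      using gterm_lim[OF assms(2), of y0] y0(3) by (intro order_tendstoD) auto
    have "(\<lambda>t. real m * real k / real t) \<longlonglongrightarrow> 0" by real_asymp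
    hence e2: "\<forall>\<^sub>F t in sequentially. real m * real k / real t < y0"
      using y0(1) by (intro order_tendstoD) auto
    show "\<forall>\<^sub>F t in sequentially. b < g m t k"
      using e1 e2 eventually_ge_at_top[of k]
    proof eventually_elim
      case (elim t)
      then show ?case using gge[of t y0] y0 by force
    qed
  qed
  define M where "M = min (exp 1) (1 + real k / (real k - real m + 1))"
  have M0: "0 \<le> M" unfolding M_def using assms by (auto simp: min_def)
  have HM: "H \<le> M ^ m" unfolding H_def M_def using h_bound[OF assms(1,2)] ys by auto
  show ?thesis
  proof (intro exI conjI)
    show "(\<lambda>t. root m (g m t k)) \<longlonglongrightarrow> root m H" by (rule tendsto_real_root[OF glim])
    show "root m (g m n k) \<le> root m H" using gle[OF assms(3)] assms by (intro real_root_le_mono) auto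
    have "root m H \<le> root m (M ^ m)" using HM assms by (intro real_root_le_mono) auto
    also have "\<dots> = M" using M0 assms by (simp add: real_root_power_cancel)
    finally show "root m H \<le> min (exp 1) (1 + real k / (real k - real m + 1))" unfolding M_def .
  qed
qed

end
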